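(* Let $\boldsymbol{\theta}$ be a parameter with real-valued treatment effect $\theta=\theta(\boldsymbol{\theta})$, $\delta\in\mathbb{R}$, $c\in(0,1)$, $\mathcal{E}=\{\theta>\delta\}$, $\bar{\mathcal{E}}=\{\theta\le\delta\}$. Let $\pi_{\mathrm{a}}$ and $\pi_{\mathrm{d}}$ be priors on $\boldsymbol{\theta}$ each giving positive probability to $\mathcal{E}$ and $\bar{\mathcal{E}}$, with $\pi_{\mathrm{a}}(\boldsymbol{\theta}\mid\mathcal{E})=\pi_{\mathrm{d}}(\boldsymbol{\theta}\mid\mathcal{E})$ and $\pi_{\mathrm{a}}(\boldsymbol{\theta}\mid\bar{\mathcal{E}})=\pi_{\mathrm{d}}(\boldsymbol{\theta}\mid\bar{\mathcal{E}})$, and let data $\mathcal{D}$ have likelihood $f(\mathcal{D}\mid\boldsymbol{\theta})$. Let $\mathcal{S}(\mathcal{D};c)=\mathbb{I}\{\Pr_{\mathrm{a}}(\mathcal{E}\mid\mathcal{D})>c\}$ and $\mathrm{PID}(c)=\Pr_{\mathrm{d}}(\bar{\mathcal{E}}\mid\mathcal{S}=1)$ under the joint model $\boldsymbol{\theta}\sim\pi_{\mathrm{d}}$, $\mathcal{D}\mid\boldsymbol{\theta}\sim f$ (assuming $\Pr_{\mathrm{d}}(\mathcal{S}=1)>0$). If $R=\frac{\Pr_{\mathrm{d}}(\mathcal{E})/\Pr_{\mathrm{d}}(\bar{\mathcal{E}})}{\Pr_{\mathrm{a}}(\mathcal{E})/\Pr_{\mathrm{a}}(\bar{\mathcal{E}})}=1$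 (which holds in particular when $\pi_{\mathrm{a}}=\pi_{\mathrm{d}}$), then $\mathrm{PID}(c)\le1-c$.
   Context: $\Pr_{\mathrm{a}}(\cdot\mid\mathcal{D})$ is the posterior under the analysis prior $\pi_{\mathrm{a}}$; $\Pr_{\mathrm{a}},\Pr_{\mathrm{d}}$ denote prior probabilities. *)

theory Defs
  imports "HOL-Probability.Probability"
begin

definition posterior :: "'p measure \<Rightarrow> ('p \<Rightarrow> 'd \<Rightarrow> real) \<Rightarrow> 'p set \<Rightarrow> 'd \<Rightarrow> real" where
  "posterior P f A x = (\<integral>t. indicator A t * f t x \<partial>P) / (\<integral>t. f t x \<partial>P)"

text \<open>Joint model: theta ~ P, data | theta ~ f(. | theta) dmu.\<close>
definition joint_model :: "'p measure \<Rightarrow> 'd measure \<Rightarrow> ('p \<Rightarrow> 'd \<Rightarrow> real) \<Rightarrow> ('p \<times> 'd) measure" where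
  "joint_model P mu f = density (P \<Otimes>\<^sub>M mu) (\<lambda>(t, x). ennreal (f t x))"

definition success :: "'p measure \<Rightarrow> ('p \<Rightarrow> 'd \<Rightarrow> real) \<Rightarrow> 'p set \<Rightarrow> real \<Rightarrow> 'd \<Rightarrow> bool" where
  "success pia f E c x \<longleftrightarrow> posterior pia f E x > c"

definition PID :: "'p measure \<Rightarrow> 'p measure \<Rightarrow> 'd measure \<Rightarrow> ('p \<Rightarrow> 'd \<Rightarrow> real) \<Rightarrow> 'p set \<Rightarrow> real \<Rightarrow> real" where
  "PID pia pid mu f E c =
     measure (joint_model pid mu f) {(t, x) \<in> space pid \<times> space mu. t \<notin> E \<and> success pia f E c x}
     / measure (joint_model pid mu f) {(t, x) \<in> space pid \<times> space mu. success pia f E c x}"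

end

theory Submission
  imports Defs
begin

theorem corollary1:
  fixes pia pid :: "'p measure" and mu :: "'d measure"
    and theta :: "'p \<Rightarrow> real" and f :: "'p \<Rightarrow> 'd \<Rightarrow> real"
    and \<delta> c :: real and E Ebar :: "'p set"
  assumes pa: "prob_space pia" and pd: "prob_space pid"
    and sets_eq: "sets pia = sets pid"
    and mu: "sigma_finite_measure mu"
    and theta_meas: "theta \<in> borel_measurable pid"
    and c: "0 < c" "c < 1"
    and E_def: "E = {t \<in> space pid. theta t > \<delta>}"
    and Ebar_def: "Ebar = {t \<in> space pid. theta t \<le> \<delta>}"
    and pos: "measure pia E > 0" "measure pia Ebar > 0" "measure pid E > 0" "measure pid Ebar > 0"
    and condE: "\<forall>A \<in> sets pid. measure pia (A \<inter> E) / measure pia E = measure pid (A \<inter> E) / measure pid E"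
    and condEbar: "\<forall>A \<in> sets pid. measure pia (A \<inter> Ebar) / measure pia Ebar = measure pid (A \<inter> Ebar) / measure pid Ebar"
    and f_meas: "(\<lambda>(t, x). f t x) \<in> borel_measurable (pid \<Otimes>\<^sub>M mu)"
    and f_nonneg: "\<forall>t \<in> space pid. \<forall>x \<in> space mu. f t x \<ge> 0"
    and f_dens: "\<forall>t \<in> space pid. (\<integral>\<^sup>+ x. ennreal (f t x) \<partial>mu) = 1"
    and S_pos: "measure (joint_model pid mu f) {(t, x) \<in> space pid \<times> space mu. success pia f E c x} > 0"
    and R1: "(measure pid E / measure pid Ebar) / (measure pia E / measure pia Ebar) = 1"
  shows "PID pia pid mu f E c \<le> 1 - c"
proof -
  interpret P: prob_space pid by (rule pd)
  interpret A: prob_space pia by (rule pa)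
  interpret M: sigma_finite_measure mu by (rule mu)
  interpret PM: pair_sigma_finite pid mu by unfold_locales
  have sp_eq: "space pia = space pid" using sets_eq by (rule sets_eq_imp_space_eq)
  have Em[measurable]: "E \<in> sets pid" unfolding E_def using theta_meas by measurable
  have Ebm[measurable]: "Ebar \<in> sets pid" unfolding Ebar_def using theta_meas by measurable
  have Ema: "E \<in> sets pia" "Ebar \<in> sets pia" using sets_eq by auto
  have disj: "E \<inter> Ebar = {}" and un: "E \<union> Ebar = space pid" unfolding E_def Ebar_def by auto
  have sumd: "measure pid E + measure pid Ebar = 1"
    using P.finite_measure_Union[OF Em Ebm disj] un P.prob_space by simp
  have suma: "measure pia E + measure pia Ebar = 1"
    using A.finite_measure_Union[OF Ema disj] un sp_eq A.prob_space by simp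
  have eqE: "measure pia E = measure pid E"
  proof -
    have "measure pid E * measure pia Ebar = measure pia E * measure pid Ebar"
      using R1 pos by (simp add: field_simps split: if_splits)
    moreover have "measure pia Ebar = 1 - measure pia E" "measure pid Ebar = 1 - measure pid E"
      using sumd suma by linarith+
    ultimately have "measure pid E * (1 - measure pia E) = measure pia E * (1 - measure pid E)"
      by simp
    then have "measure pid E - measure pid E * measure pia E = measure pia E - measure pia E * measure pid E"
      by (simp add: algebra_simps)
    then show ?thesis by (simp add: mult.commute)
  qed
  have eqEb: "measure pia Ebar = measure pid Ebar" using sumd suma eqE by linarith
  have meq: "measure pia A = measure pid A" if A: "A \<in> sets pid" for A
  proof -
    have A': "A \<in> sets pia" using A sets_eq by auto
    have d: "(A \<inter> E) \<inter> (A \<inter> Ebar) = {}" using disj by auto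
    have u: "(A \<inter> E) \<union> (A \<inter> Ebar) = A" using un sets.sets_into_space[OF A] by auto
    have "measure pia (A \<inter> E) = measure pid (A \<inter> E)"
      using condE A eqE pos by (simp add: field_simps)
    moreover have "measure pia (A \<inter> Ebar) = measure pid (A \<inter> Ebar)"
      using condEbar A eqEb pos by (simp add: field_simps)
    moreover have "measure pia A = measure pia (A \<inter> E) + measure pia (A \<inter> Ebar)"
      using A.finite_measure_Union[of "A \<inter> E" "A \<inter> Ebar"] A' Ema d u by auto
    moreover have "measure pid A = measure pid (A \<inter> E) + measure pid (A \<inter> Ebar)"
      using P.finite_measure_Union[of "A \<inter> E" "A \<inter> Ebar"] A d u by auto
    ultimately show ?thesis by simp
  qed
  have pia_eq: "pia = pid"
  proof (rule measure_eqI[OF sets_eq])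
    fix A assume "A \<in> sets pia"
    then show "emeasure pia A = emeasure pid A"
      using meq sets_eq by (simp add: A.emeasure_eq_measure P.emeasure_eq_measure)
  qed
  have fm[measurable]: "(\<lambda>(t, x). f t x) \<in> borel_measurable (pid \<Otimes>\<^sub>M mu)" by (rule f_meas)
  have fm2[measurable]: "(\<lambda>(x, t). f t x) \<in> borel_measurable (mu \<Otimes>\<^sub>M pid)"
    using measurable_pair_swap[OF f_meas] by simp
  have fsec[measurable]: "(\<lambda>t. f t x) \<in> borel_measurable pid" if "x \<in> space mu" for x
    using measurable_compose[OF measurable_Pair2'[OF that] f_meas] by simp
  have m1: "(\<lambda>x. \<integral>t. indicator E t * f t x \<partial>pid) \<in> borel_measurable mu"
  proof (rule P.borel_measurable_lebesgue_integral)
    have "(\<lambda>p. indicator E (snd p) * (case p of (x, t) \<Rightarrow> f t x)) \<in> borel_measurable (mu \<Otimes>\<^sub>M pid)"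
      by measurable
    then show "(\<lambda>(x, t). indicator E t * f t x) \<in> borel_measurable (mu \<Otimes>\<^sub>M pid)"
      by (simp add: case_prod_beta')
  qed
  have m2: "(\<lambda>x. \<integral>t. f t x \<partial>pid) \<in> borel_measurable mu"
    by (rule P.borel_measurable_lebesgue_integral) (use fm2 in simp)
  define S where "S = {x \<in> space mu. success pid f E c x}"
  have Sm[measurable]: "S \<in> sets mu"
  proof -
    have "(\<lambda>x. posterior pid f E x) \<in> borel_measurable mu"
      unfolding posterior_def using m1 m2 by measurable
    then show ?thesis unfolding S_def success_def by measurable
  qed
  define N where "N = {(t, x) \<in> space pid \<times> space mu. t \<notin> E \<and> success pia f E c x}"
  define D where "D = {(t, x) \<in> space pid \<times> space mu. success pia f E c x}"
  have N_eq: "N = Ebar \<times> S" unfolding N_def S_def pia_eq Ebar_def E_def by auto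
  have D_eq: "D = space pid \<times> S" unfolding D_def S_def pia_eq by auto
  have Nm[measurable]: "N \<in> sets (pid \<Otimes>\<^sub>M mu)" unfolding N_eq by simp
  have Dm[measurable]: "D \<in> sets (pid \<Otimes>\<^sub>M mu)" unfolding D_eq by simp
  define g where "g = (\<lambda>(t, x). ennreal (f t x))"
  have gm[measurable]: "g \<in> borel_measurable (pid \<Otimes>\<^sub>M mu)" unfolding g_def by measurable
  have JN: "emeasure (joint_model pid mu f) N = (\<integral>\<^sup>+ p. g p * indicator N p \<partial>(pid \<Otimes>\<^sub>M mu))"
    unfolding joint_model_def g_def[symmetric] by (rule emeasure_density) simp_all
  have JD: "emeasure (joint_model pid mu f) D = (\<integral>\<^sup>+ p. g p * indicator D p \<partial>(pid \<Otimes>\<^sub>M mu))"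
    unfolding joint_model_def g_def[symmetric] by (rule emeasure_density) simp_all
  have pw: "(\<integral>\<^sup>+ t. g (t, x) * indicator N (t, x) \<partial>pid)
      \<le> (\<integral>\<^sup>+ t. ennreal (1 - c) * (g (t, x) * indicator D (t, x)) \<partial>pid)"
    if x: "x \<in> space mu" for x
  proof (cases "x \<in> S")
    case False
    then have "(\<integral>\<^sup>+ t. g (t, x) * indicator N (t, x) \<partial>pid) = 0"
      unfolding N_eq by simp
    then show ?thesis by simp
  next
    case True
    define I where "I = (\<integral>t. f t x \<partial>pid)"
    define IE where "IE = (\<integral>t. indicator E t * f t x \<partial>pid)"
    have post: "IE / I > c" using True unfolding S_def success_def posterior_def I_def IE_def pia_eq by simp
    then have "I \<noteq> 0" using c by auto
    then have int: "integrable pid (\<lambda>t. f t x)" unfolding I_def using not_integrable_integral_eq by blast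
    have nn: "AE t in pid. 0 \<le> f t x" using f_nonneg x by auto
    have "I \<ge> 0" unfolding I_def using nn by (rule integral_nonneg_AE)
    with \<open>I \<noteq> 0\<close> have Ipos: "I > 0" by simp
    have IEgt: "IE > c * I" using post Ipos by (simp add: field_simps)
    have intE: "integrable pid (\<lambda>t. f t x * indicator E t)"
      using integrable_real_mult_indicator[OF Em int] .
    have intEb: "integrable pid (\<lambda>t. f t x * indicator Ebar t)"
      using integrable_real_mult_indicator[OF Ebm int] .
    have "I = (\<integral>t. f t x * indicator E t + f t x * indicator Ebar t \<partial>pid)"
      unfolding I_def
      by (rule Bochner_Integration.integral_cong[OF refl]) (auto simp: E_def Ebar_def split: split_indicator)
    also have "\<dots> = IE + (\<integral>t. f t x * indicator Ebar t \<partial>pid)"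
      unfolding IE_def using intE intEb by (simp add: mult.commute)
    finally have IEb: "(\<integral>t. f t x * indicator Ebar t \<partial>pid) = I - IE" by simp
    have "(\<integral>\<^sup>+ t. g (t, x) * indicator N (t, x) \<partial>pid) = (\<integral>\<^sup>+ t. ennreal (f t x * indicator Ebar t) \<partial>pid)"
      by (rule nn_integral_cong) (use True x in \<open>auto simp: N_eq g_def split: split_indicator\<close>)
    also have "\<dots> = ennreal (I - IE)"
    proof -
      have "AE t in pid. 0 \<le> f t x * indicator Ebar t" using nn by eventually_elim simp
      then show ?thesis using nn_integral_eq_integral[OF intEb] IEb by simp
    qed
    also have "\<dots> \<le> ennreal ((1 - c) * I)"
      using IEgt by (intro ennreal_leI) (simp add: algebra_simps)
    also have "\<dots> = (\<integral>\<^sup>+ t. ennreal ((1 - c) * f t x) \<partial>pid)"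
    proof -
      have "AE t in pid. 0 \<le> (1 - c) * f t x" using nn by eventually_elim (use c in simp)
      then show ?thesis using nn_integral_eq_integral[of pid "\<lambda>t. (1 - c) * f t x"] int unfolding I_def
        by simp
    qed
    also have "\<dots> = (\<integral>\<^sup>+ t. ennreal (1 - c) * (g (t, x) * indicator D (t, x)) \<partial>pid)"
      by (rule nn_integral_cong) (use True x c in \<open>auto simp: D_eq g_def ennreal_mult'\<close>)
    finally show ?thesis .
  qed
  have "emeasure (joint_model pid mu f) N = (\<integral>\<^sup>+ x. \<integral>\<^sup>+ t. g (t, x) * indicator N (t, x) \<partial>pid \<partial>mu)"
    unfolding JN by (rule PM.nn_integral_snd[symmetric]) simp
  also have "\<dots> \<le> (\<integral>\<^sup>+ x. \<integral>\<^sup>+ t. ennreal (1 - c) * (g (t, x) * indicator D (t, x)) \<partial>pid \<partial>mu)"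
    by (rule nn_integral_mono) (rule pw)
  also have "\<dots> = (\<integral>\<^sup>+ p. ennreal (1 - c) * (g p * indicator D p) \<partial>(pid \<Otimes>\<^sub>M mu))"
    by (rule PM.nn_integral_snd) simp
  also have "\<dots> = ennreal (1 - c) * emeasure (joint_model pid mu f) D"
    unfolding JD by (rule nn_integral_cmult) simp
  finally have le: "emeasure (joint_model pid mu f) N \<le> ennreal (1 - c) * emeasure (joint_model pid mu f) D" .
  have Dfin: "emeasure (joint_model pid mu f) D \<noteq> \<top>"
    using S_pos unfolding D_def[symmetric] by (auto simp: measure_def)
  have Nfin: "emeasure (joint_model pid mu f) N \<noteq> \<top>"
    using le Dfin by (metis ennreal_mult_eq_top_iff ennreal_neq_top neq_top_trans)
  have "measure (joint_model pid mu f) N \<le> (1 - c) * measure (joint_model pid mu f) D"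
  proof -
    have "ennreal (measure (joint_model pid mu f) N) \<le> ennreal ((1 - c) * measure (joint_model pid mu f) D)"
      using le Dfin Nfin c by (simp add: emeasure_eq_ennreal_measure ennreal_mult)
    then show ?thesis using c by (simp add: ennreal_le_iff)
  qed
  moreover have "measure (joint_model pid mu f) D > 0" using S_pos unfolding D_def .
  ultimately show ?thesis unfolding PID_def N_def[symmetric] D_def[symmetric]
    by (simp add: divide_le_eq)
qed

end
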